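(* For positive integers $b,n$ and a nonnegative integer $c$, $$M_n(1,b,c)=M_{n-1}(c+1,b,c).$$
   Context: $$M_n(a,b,c):=\operatorname{CT}_x\prod_{i=1}^n(1-x_i)^{-b}x_i^{-a+1}\prod_{1\le i<j\le n}(x_j-x_i)^{-c},$$ where $\operatorname{CT}_x=\operatorname{CT}_{x_n}\cdots\operatorname{CT}_{x_1}$ is iterated constant-term extraction, $(1-x_i)^{-b}$ is expanded as a power series in $x_i$, and for $i<j$, $(x_j-x_i)^{-c}=x_j^{-c}(1-x_i/x_j)^{-c}$ is expanded as a power series in $x_i/x_j$. For $n=0$ the empty product gives $M_0=1$. *)

theory Defs
  imports Main
begin

text \<open>Variables are x_0,...,x_{n-1} (0-based). Expanding
  (1-x_i)^{-b} = sum_k C(b+k-1,k) x_i^k and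
  (x_j-x_i)^{-c} = x_j^{-c} sum_m C(c+m-1,m) (x_i/x_j)^m  (i<j),
  a term of the full expansion is indexed by k :: nat => nat (k i for i<n)
  and m :: nat => nat => nat (m i j for i<j<n).
  The exponent of x_i in that term is given by CT_exp.
  The iterated constant term is the sum of coefficients of all terms with
  every exponent zero (a finite set).\<close>

definition CT_exp :: "nat \<Rightarrow> int \<Rightarrow> nat \<Rightarrow> (nat \<Rightarrow> nat) \<Rightarrow> (nat \<Rightarrow> nat \<Rightarrow> nat) \<Rightarrow> nat \<Rightarrow> int" where
  "CT_exp n a c k m i =
     1 - a + int (k i) + (\<Sum>j\<in>{i<..<n}. int (m i j)) - (\<Sum>j<i. int c + int (m j i))"

definition CT_terms :: "nat \<Rightarrow> int \<Rightarrow> nat \<Rightarrow> ((nat \<Rightarrow> nat) \<times> (nat \<Rightarrow> nat \<Rightarrow> nat)) set" where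
  "CT_terms n a c = {(k, m).
     (\<forall>i. n \<le> i \<longrightarrow> k i = 0) \<and>
     (\<forall>i j. \<not> (i < j \<and> j < n) \<longrightarrow> m i j = 0) \<and>
     (\<forall>i<n. CT_exp n a c k m i = 0)}"

definition M :: "nat \<Rightarrow> int \<Rightarrow> nat \<Rightarrow> nat \<Rightarrow> int" where
  "M n a b c = (\<Sum>(k, m)\<in>CT_terms n a c.
      (\<Prod>i<n. int ((b + k i - 1) choose (k i))) *
      (\<Prod>i<n. \<Prod>j\<in>{i<..<n}. int ((c + m i j - 1) choose (m i j))))"

end

theory Submission
  imports Defs
begin

lemma ivl_shift_sum:
  "(\<Sum>j\<in>{Suc i<..<Suc N}. (f::nat\<Rightarrow>int) j) = (\<Sum>j\<in>{i<..<N}. f (Suc j))"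
proof -
  have "{Suc i<..<Suc N} = Suc ` {i<..<N}"
    by (metis atLeastSucLessThan_greaterThanLessThan image_Suc_atLeastLessThan)
  then show ?thesis by (simp add: sum.reindex)
qed

lemma ivl_shift_prod:
  "(\<Prod>j\<in>{Suc i<..<Suc N}. (f::nat\<Rightarrow>int) j) = (\<Prod>j\<in>{i<..<N}. f (Suc j))"
proof -
  have "{Suc i<..<Suc N} = Suc ` {i<..<N}"
    by (metis atLeastSucLessThan_greaterThanLessThan image_Suc_atLeastLessThan)
  then show ?thesis by (simp add: prod.reindex)
qed

lemma exp_shift:
  assumes "\<And>j. m 0 j = 0"
  shows "CT_exp (Suc N) 1 c k m (Suc i) =
         CT_exp N (int c + 1) c (\<lambda>i. k (Suc i)) (\<lambda>i j. m (Suc i) (Suc j)) i"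
  unfolding CT_exp_def
  using assms by (simp add: ivl_shift_sum sum.lessThan_Suc_shift del: sum.lessThan_Suc)

lemma first_zero:
  assumes "(k, m) \<in> CT_terms (Suc N) 1 c"
  shows "k 0 = 0" "\<And>j. m 0 j = 0"
proof -
  have e: "CT_exp (Suc N) 1 c k m 0 = 0" using assms by (auto simp: CT_terms_def)
  have z: "int (k 0) + (\<Sum>j\<in>{0<..<Suc N}. int (m 0 j)) = 0"
    using e by (simp add: CT_exp_def)
  have nn: "(\<Sum>j\<in>{0<..<Suc N}. int (m 0 j)) \<ge> 0" by (intro sum_nonneg) auto
  then show "k 0 = 0" using z by linarith
  have s0: "(\<Sum>j\<in>{0<..<Suc N}. int (m 0 j)) = 0" using z nn by linarith
  fix j
  show "m 0 j = 0"
  proof (cases "0 < j \<and> j < Suc N")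
    case True
    then show ?thesis using s0 by (subst (asm) sum_nonneg_eq_0_iff) auto
  next
    case False
    then show ?thesis using assms by (auto simp: CT_terms_def)
  qed
qed

theorem corollary5p8:
  fixes n b c :: nat
  assumes "n \<ge> 1" and "b \<ge> 1"
  shows "M n 1 b c = M (n - 1) (int c + 1) b c"
proof -
  obtain N where nN: "n = Suc N" using assms(1) by (cases n) auto
  define S where "S = CT_terms (Suc N) 1 c"
  define T where "T = CT_terms N (int c + 1) c"
  define dn :: "(nat \<Rightarrow> nat) \<times> (nat \<Rightarrow> nat \<Rightarrow> nat) \<Rightarrow> (nat \<Rightarrow> nat) \<times> (nat \<Rightarrow> nat \<Rightarrow> nat)"
    where "dn = (\<lambda>(k, m). (\<lambda>i. k (Suc i), \<lambda>i j. m (Suc i) (Suc j)))"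
  define up :: "(nat \<Rightarrow> nat) \<times> (nat \<Rightarrow> nat \<Rightarrow> nat) \<Rightarrow> (nat \<Rightarrow> nat) \<times> (nat \<Rightarrow> nat \<Rightarrow> nat)"
    where "up = (\<lambda>(k, m). (\<lambda>i. if i = 0 then 0 else k (i - 1),
                 \<lambda>i j. if i = 0 then 0 else m (i - 1) (j - 1)))"
  define g where "g = (\<lambda>n. \<lambda>(k::nat\<Rightarrow>nat, m::nat\<Rightarrow>nat\<Rightarrow>nat).
      (\<Prod>i<n. int ((b + k i - 1) choose (k i))) *
      (\<Prod>i<n. \<Prod>j\<in>{i<..<n}. int ((c + m i j - 1) choose (m i j))))"
  have MS: "M n 1 b c = sum (g (Suc N)) S"
    unfolding M_def S_def g_def nN by (rule sum.cong) auto
  have MT: "M (n - 1) (int c + 1) b c = sum (g N) T"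
    unfolding M_def T_def g_def nN by (rule sum.cong) auto
  have "sum (g (Suc N)) S = sum (g N) T"
  proof (rule sum.reindex_bij_witness[where i = up and j = dn])
    fix a assume a: "a \<in> S"
    obtain k m where km: "a = (k, m)" by (cases a)
    have k0: "k 0 = 0" and m0: "\<And>j. m 0 j = 0"
      using first_zero a km S_def by auto
    have e1: "(\<lambda>i. if i = 0 then 0 else k (Suc (i - 1))) = k"
    proof
      fix i show "(if i = 0 then 0 else k (Suc (i - 1))) = k i"
        using k0 by (cases i) auto
    qed
    have e2: "(\<lambda>i j. if i = 0 then 0 else m (Suc (i - 1)) (Suc (j - 1))) = m"
    proof (intro ext)
      fix i j show "(if i = 0 then 0 else m (Suc (i - 1)) (Suc (j - 1))) = m i j"
        using m0 a km S_def by (cases i; cases j) (auto simp: CT_terms_def)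
    qed
    show "up (dn a) = a"
      unfolding km up_def dn_def using e1 e2 by simp
    show "dn a \<in> T"
    proof -
      have "(\<forall>i. Suc N \<le> i \<longrightarrow> k i = 0)" "(\<forall>i j. \<not> (i < j \<and> j < Suc N) \<longrightarrow> m i j = 0)"
        "(\<forall>i<Suc N. CT_exp (Suc N) 1 c k m i = 0)"
        using a km S_def by (auto simp: CT_terms_def)
      then show ?thesis
        unfolding km dn_def T_def CT_terms_def
        using exp_shift[of m N c k, OF m0] by auto
    qed
    show "g N (dn a) = g (Suc N) a"
      unfolding km dn_def g_def using k0 m0
      by (simp add: prod.lessThan_Suc_shift ivl_shift_prod del: prod.lessThan_Suc)
  next
    fix a assume a: "a \<in> T"
    obtain k m where km: "a = (k, m)" by (cases a)
    show "dn (up a) = a" unfolding km up_def dn_def by auto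
    obtain k' m' where km': "up a = (k', m')" by (cases "up a")
    have k'd: "k' = (\<lambda>i. if i = 0 then 0 else k (i - 1))"
      and m'd: "m' = (\<lambda>i j. if i = 0 then 0 else m (i - 1) (j - 1))"
      using km' km up_def by auto
    have h1: "\<forall>i. N \<le> i \<longrightarrow> k i = 0" "\<forall>i j. \<not> (i < j \<and> j < N) \<longrightarrow> m i j = 0"
        "\<forall>i<N. CT_exp N (int c + 1) c k m i = 0"
      using a km T_def by (auto simp: CT_terms_def)
    have m'0: "\<And>j. m' 0 j = 0" using m'd by simp
    have sh: "(\<lambda>i. k' (Suc i)) = k" "(\<lambda>i j. m' (Suc i) (Suc j)) = m"
      using k'd m'd by auto
    have c1: "\<forall>i. Suc N \<le> i \<longrightarrow> k' i = 0" using h1 k'd by auto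
    have c2: "\<forall>i j. \<not> (i < j \<and> j < Suc N) \<longrightarrow> m' i j = 0"
    proof (intro allI impI)
      fix i j assume "\<not> (i < j \<and> j < Suc N)"
      then show "m' i j = 0" using h1(2) m'd
        by (cases i; cases j) auto
    qed
    have c3: "\<forall>i<Suc N. CT_exp (Suc N) 1 c k' m' i = 0"
    proof (intro allI impI)
      fix i assume i: "i < Suc N"
      show "CT_exp (Suc N) 1 c k' m' i = 0"
      proof (cases i)
        case 0
        then show ?thesis using k'd m'd by (simp add: CT_exp_def)
      next
        case (Suc i')
        then show ?thesis using exp_shift[of m' N c k' i', OF m'0] sh h1(3) i by simp
      qed
    qed
    show "up a \<in> S" unfolding km' S_def CT_terms_def using c1 c2 c3 by auto
  qed
  then show ?thesis using MS MT by simp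
qed

end
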